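(* Let $M$ be a commutative monoid with identity $e$ and $\mathcal{A}$ an $\mathbb{H}M$-module. For every $r\ge1$, $H^0(M,r;\mathcal{A})\cong\mathcal{A}(e)$.
   Context: Let $M$ be a commutative monoid with identity $e$. $\mathbb{H}M$ has objects the elements of $M$ and morphisms $(x,y):x\to xy$, composition $(xy,z)(x,y)=(x,yz)$. An $\mathbb{H}M$-module $\mathcal{A}$ is a functor $\mathbb{H}M\to\mathbf{Ab}$: groups $\mathcal{A}(x)$ with $y_*:\mathcal{A}(x)\to\mathcal{A}(xy)$, $y_*z_*=(yz)_*$, $e_*=\mathrm{id}$. Tensor product $(\mathcal{A}\otimes_{\mathbb{H}M}\mathcal{B})(x)=\bigoplus_{zt=x}\mathcal{A}(z)\otimes\mathcal{B}(t)/(u_*a\otimes b=a\otimes u_*b)$; unit the constant module $\mathbb{Z}$; chain complexes of $\mathbb{H}M$-modules form a symmetric monoidal category with Koszul signs. A commutative DGA-algebra over $\mathbb{H}M$ is a commutative monoid $(\mathcal{A},\circ,\iota)$ there with a monoid morphism $\epsilon:\mathcal{A}\to\mathbb{Z}$, $\epsilon_x(a)=\tilde\epsilon(a)x$. Its reduced bar construction $\mathbf{B}(\mathcal{A})$ has $\mathbf{B}(\mathcal{A})_n(x)$ generated by $[\,]$ (degree $0$) and $[a_1|\cdots|a_p]$ with $a_i\in(\mathrm{coker}\,\iota)_{r_i}(x_i)$, $x_1\cdots x_p=x$, $p+\sum r_i=n$; differential $\partial[a_1|\cdots|a_p]=-\sum_i(-1)^{e_{i-1}}[\cdots|\partial a_i|\cdots]+\tilde\epsilon(a_1)x_{1*}[a_2|\cdots]+\sum_{i<p}(-1)^{e_i}[\cdots|a_i\circ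 a_{i+1}|\cdots]+(-1)^{e_p}\tilde\epsilon(a_p)x_{p*}[\cdots|a_{p-1}]$, $e_i=i+r_1+\cdots+r_i$; multiplication the signed shuffle product $[a_1|\cdots|a_p]\circ[a_{p+1}|\cdots|a_{p+q}]=\sum_\sigma(-1)^{e(\sigma)}[a_{\sigma^{-1}(1)}|\cdots|a_{\sigma^{-1}(p+q)}]$, $e(\sigma)=\sum_{\sigma(i)>\sigma(p+j)}(1+r_i)(1+r_{p+j})$; unit $[\,]$; augmentation $\mathbf{B}(\mathcal{A})_0\cong\mathbb{Z}$. It is again such an algebra, so $\mathbf{B}^r$ is defined. $\mathcal{Z}M$: $\mathcal{Z}M(x)$ free abelian on $\{(u,v):uv=x\}$, $y_*(u,v)=(yu,v)$, $(u,v)\circ(w,t)=(uw,vt)$, unit $(e,e)$, degree $0$, augmentation $(u,v)\mapsto$ generator of $\mathbb{Z}(x)$. $H^n(M,r;\mathcal{A})=H^n(\mathrm{Hom}_{\mathbb{H}M}(\mathbf{B}^r(\mathcal{Z}M),\mathcal{A}))$. *)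

theory Defs
  imports "HOL-Library.Poly_Mapping" "HOL-Algebra.Algebra" "HOL-Combinatorics.Permutations"
begin

text \<open>All modules occurring (ZM and its iterated reduced bar constructions) are free
HM-modules.  A basis element at object x is a pair (u, g) where g is a "generator" and
u * wt g = x; the pair stands for u_* g.  Level 0 (ZM): Gz v stands for (e,v) in ZM(v),
so (u, Gz v) is the basis element (u,v) of ZM(uv).  Level r+1: Bar [g1,...,gp] stands for
[g1|...|gp] with the gi level-r generators different from the unit generator (so that they
represent a basis of coker iota).\<close>

datatype 'm gen = Gz 'm | Bar "'m gen list"

fun wt :: "'m::comm_monoid_mult gen \<Rightarrow> 'm" where
  "wt (Gz v) = v"
| "wt (Bar gs) = prod_list (map wt gs)"

fun gdeg :: "'m gen \<Rightarrow> nat" where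
  "gdeg (Gz v) = 0"
| "gdeg (Bar gs) = length gs + sum_list (map gdeg gs)"

type_synonym 'm chain = "('m \<times> 'm gen) \<Rightarrow>\<^sub>0 int"

definition push :: "'m::comm_monoid_mult \<Rightarrow> 'm chain \<Rightarrow> 'm chain" where
  "push y c = frag_extend (\<lambda>(u, g). frag_of (y * u, g)) c"

text \<open>A commutative DGA over HM with free basis data: differential, product and
augmentation (epsilon tilde) on generators, and the unit generator.\<close>
record 'm bdga =
  bd :: "'m gen \<Rightarrow> 'm chain"
  bm :: "'m gen \<Rightarrow> 'm gen \<Rightarrow> 'm chain"
  bep :: "'m gen \<Rightarrow> int"
  bunit :: "'m gen"

text \<open>ZM: (u,v) o (w,t) = (uw,vt), zero differential, augmentation 1 on every basis element,
unit (e,e).\<close>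
definition zm :: "'m::comm_monoid_mult bdga" where
  "zm = \<lparr>bd = (\<lambda>_. 0), bm = (\<lambda>g h. frag_of (1, Gz (wt g * wt h))),
         bep = (\<lambda>_. 1), bunit = Gz 1\<rparr>"

definition esgn :: "'m gen list \<Rightarrow> nat \<Rightarrow> int" where
  "esgn gs i = (-1) ^ (i + sum_list (map gdeg (take i gs)))"

text \<open>Replace the entries at positions i..<j of the bar by a chain c (elements of c of the
form w_* h become w_*[..|h|..]; the unit generator is zero in coker iota).\<close>
definition bar_repl :: "'m gen \<Rightarrow> 'm gen list \<Rightarrow> nat \<Rightarrow> nat \<Rightarrow> 'm chain \<Rightarrow> 'm chain" where
  "bar_repl u gs i j c =
     frag_extend (\<lambda>(w, h). if h = u then 0 else frag_of (w, Bar (take i gs @ [h] @ drop j gs))) c"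

definition bar_diff :: "'m::comm_monoid_mult bdga \<Rightarrow> 'm gen list \<Rightarrow> 'm chain" where
  "bar_diff A gs = (let p = length gs in
      - (\<Sum>k<p. frag_cmul (esgn gs k) (bar_repl (bunit A) gs k (Suc k) (bd A (gs ! k))))
      + (if p = 0 then 0 else frag_cmul (bep A (hd gs)) (frag_of (wt (hd gs), Bar (tl gs))))
      + (\<Sum>i\<in>{1..<p}. frag_cmul (esgn gs i)
            (bar_repl (bunit A) gs (i - 1) (Suc i) (bm A (gs ! (i - 1)) (gs ! i))))
      + (if p = 0 then 0 else frag_cmul (esgn gs p * bep A (last gs))
            (frag_of (wt (last gs), Bar (butlast gs)))))"

text \<open>(p,q)-shuffles: permutations sigma of {0..<p+q} increasing on {0..<p} and on {p..<p+q};
sigma i is the position of the i-th entry.\<close>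
definition shuffles :: "nat \<Rightarrow> nat \<Rightarrow> (nat \<Rightarrow> nat) set" where
  "shuffles p q = {\<sigma>. \<sigma> permutes {..<p + q} \<and> strict_mono_on {..<p} \<sigma> \<and> strict_mono_on {p..<p + q} \<sigma>}"

definition shuffle_exp :: "'m gen list \<Rightarrow> nat \<Rightarrow> nat \<Rightarrow> (nat \<Rightarrow> nat) \<Rightarrow> nat" where
  "shuffle_exp zs p q \<sigma> =
     (\<Sum>(i, j)\<in>{(i, j). i < p \<and> j < q \<and> \<sigma> (p + j) < \<sigma> i}.
        (1 + gdeg (zs ! i)) * (1 + gdeg (zs ! (p + j))))"

definition bar_mult :: "'m::comm_monoid_mult gen list \<Rightarrow> 'm gen list \<Rightarrow> 'm chain" where
  "bar_mult gs hs = (let p = length gs; q = length hs; zs = gs @ hs in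
      \<Sum>\<sigma>\<in>shuffles p q. frag_cmul ((-1) ^ shuffle_exp zs p q \<sigma>)
         (frag_of (1, Bar (map (\<lambda>k. zs ! inv_into UNIV \<sigma> k) [0..<p + q]))))"

definition barstep :: "'m::comm_monoid_mult bdga \<Rightarrow> 'm bdga" where
  "barstep A = \<lparr>bd = (\<lambda>g. case g of Bar gs \<Rightarrow> bar_diff A gs | Gz _ \<Rightarrow> 0),
                bm = (\<lambda>g h. case (g, h) of (Bar gs, Bar hs) \<Rightarrow> bar_mult gs hs | _ \<Rightarrow> 0),
                bep = (\<lambda>g. if g = Bar [] then 1 else 0),
                bunit = Bar []\<rparr>"

definition iter_bar :: "nat \<Rightarrow> 'm::comm_monoid_mult bdga" where
  "iter_bar r = (barstep ^^ r) zm"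

fun gens :: "nat \<Rightarrow> 'm::comm_monoid_mult gen set" where
  "gens 0 = range Gz"
| "gens (Suc r) = {Bar gs | gs. set gs \<subseteq> gens r - {bunit (iter_bar r :: 'm bdga)}}"

definition Bmod :: "nat \<Rightarrow> nat \<Rightarrow> 'm::comm_monoid_mult \<Rightarrow> 'm chain set" where
  "Bmod r n x = {c. \<forall>(w, g)\<in>Poly_Mapping.keys c. g \<in> gens r \<and> gdeg g = n \<and> w * wt g = x}"

definition Bgrp :: "nat \<Rightarrow> nat \<Rightarrow> 'm::comm_monoid_mult \<Rightarrow> 'm chain monoid" where
  "Bgrp r n x = \<lparr>carrier = Bmod r n x, Group.monoid.mult = (+), Group.monoid.one = 0\<rparr>"

definition bdiff :: "nat \<Rightarrow> 'm::comm_monoid_mult chain \<Rightarrow> 'm chain" where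
  "bdiff r c = frag_extend (\<lambda>(w, g). push w (bd (iter_bar r) g)) c"

text \<open>An HM-module: abelian groups A x, and act x y = y_* : A x \<rightarrow> A (x*y).\<close>
definition hm_module :: "('m::comm_monoid_mult \<Rightarrow> 'a monoid) \<Rightarrow> ('m \<Rightarrow> 'm \<Rightarrow> 'a \<Rightarrow> 'a) \<Rightarrow> bool" where
  "hm_module A act \<longleftrightarrow>
     (\<forall>x. comm_group (A x)) \<and>
     (\<forall>x y. act x y \<in> hom (A x) (A (x * y))) \<and>
     (\<forall>x a. a \<in> carrier (A x) \<longrightarrow> act x 1 a = a) \<and>
     (\<forall>x y z a. a \<in> carrier (A x) \<longrightarrow> act (x * y) z (act x y a) = act x (y * z) a)"

text \<open>Hom_HM(B^r(ZM)_n, A): natural families of homomorphisms (extensional).\<close>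
definition HomB :: "nat \<Rightarrow> nat \<Rightarrow> ('m::comm_monoid_mult \<Rightarrow> 'a monoid) \<Rightarrow> ('m \<Rightarrow> 'm \<Rightarrow> 'a \<Rightarrow> 'a)
    \<Rightarrow> ('m \<Rightarrow> 'm chain \<Rightarrow> 'a) set" where
  "HomB r n A act = {f. (\<forall>x. f x \<in> hom (Bgrp r n x) (A x) \<and>
                              (\<forall>c. c \<notin> Bmod r n x \<longrightarrow> f x c = undefined)) \<and>
                       (\<forall>x y c. c \<in> Bmod r n x \<longrightarrow> f (x * y) (push y c) = act x y (f x c))}"

definition HomG :: "nat \<Rightarrow> nat \<Rightarrow> ('m::comm_monoid_mult \<Rightarrow> 'a monoid) \<Rightarrow> ('m \<Rightarrow> 'm \<Rightarrow> 'a \<Rightarrow> 'a)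
    \<Rightarrow> ('m \<Rightarrow> 'm chain \<Rightarrow> 'a) monoid" where
  "HomG r n A act = \<lparr>carrier = HomB r n A act,
      Group.monoid.mult = (\<lambda>f g x c. if c \<in> Bmod r n x then f x c \<otimes>\<^bsub>A x\<^esub> g x c else undefined),
      Group.monoid.one = (\<lambda>x c. if c \<in> Bmod r n x then \<one>\<^bsub>A x\<^esub> else undefined)\<rparr>"

definition cobdry :: "nat \<Rightarrow> nat \<Rightarrow> ('m::comm_monoid_mult \<Rightarrow> 'm chain \<Rightarrow> 'a) \<Rightarrow> ('m \<Rightarrow> 'm chain \<Rightarrow> 'a)" where
  "cobdry r n f = (\<lambda>x c. if c \<in> Bmod r (Suc n) x then f x (bdiff r c) else undefined)"

definition cocycles :: "nat \<Rightarrow> nat \<Rightarrow> ('m::comm_monoid_mult \<Rightarrow> 'a monoid) \<Rightarrow> ('m \<Rightarrow> 'm \<Rightarrow> 'a \<Rightarrow> 'a)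
    \<Rightarrow> ('m \<Rightarrow> 'm chain \<Rightarrow> 'a) set" where
  "cocycles r n A act = {f \<in> HomB r n A act. cobdry r n f = \<one>\<^bsub>HomG r (Suc n) A act\<^esub>}"

definition coboundaries :: "nat \<Rightarrow> nat \<Rightarrow> ('m::comm_monoid_mult \<Rightarrow> 'a monoid) \<Rightarrow> ('m \<Rightarrow> 'm \<Rightarrow> 'a \<Rightarrow> 'a)
    \<Rightarrow> ('m \<Rightarrow> 'm chain \<Rightarrow> 'a) set" where
  "coboundaries r n A act = (case n of 0 \<Rightarrow> {\<one>\<^bsub>HomG r 0 A act\<^esub>}
                               | Suc m \<Rightarrow> cobdry r m ` HomB r m A act)"

text \<open>H^n(M, r; A) = H^n(Hom_HM(B^r(ZM), A)).\<close>
definition cohom :: "nat \<Rightarrow> nat \<Rightarrow> ('m::comm_monoid_mult \<Rightarrow> 'a monoid) \<Rightarrow> ('m \<Rightarrow> 'm \<Rightarrow> 'a \<Rightarrow> 'a)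
    \<Rightarrow> ('m \<Rightarrow> 'm chain \<Rightarrow> 'a) set monoid" where
  "cohom n r A act = (HomG r n A act)\<lparr>carrier := cocycles r n A act\<rparr> Mod coboundaries r n A act"

end

theory Submission
  imports Defs
begin

lemma gens_deg0:
  assumes "r \<ge> 1" "g \<in> gens r" "gdeg g = 0"
  shows "g = Bar []"
proof -
  obtain r' where r: "r = Suc r'" using assms(1) by (cases r) auto
  then obtain gs where "g = Bar gs" using assms(2) by auto
  then show ?thesis using assms(3) by simp
qed

lemma Bar_nil_gens: "r \<ge> 1 \<Longrightarrow> Bar [] \<in> gens r"
  by (cases r) auto

lemma Bmod0_iff:
  assumes "r \<ge> 1"
  shows "c \<in> Bmod r 0 x \<longleftrightarrow> Poly_Mapping.keys c \<subseteq> {(x, Bar [])}"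
proof
  assume "c \<in> Bmod r 0 x"
  then show "Poly_Mapping.keys c \<subseteq> {(x, Bar [])}"
    unfolding Bmod_def using gens_deg0[OF assms] by fastforce
next
  assume "Poly_Mapping.keys c \<subseteq> {(x, Bar [])}"
  then show "c \<in> Bmod r 0 x"
    unfolding Bmod_def using Bar_nil_gens[OF assms] by auto
qed

lemma Bmod0_form:
  assumes "r \<ge> 1" "c \<in> Bmod r 0 x"
  shows "c = frag_cmul (Poly_Mapping.lookup c (x, Bar [])) (frag_of (x, Bar []))"
proof (rule poly_mapping_eqI)
  fix k
  have ks: "Poly_Mapping.keys c \<subseteq> {(x, Bar [])}" using assms Bmod0_iff by blast
  show "Poly_Mapping.lookup c k = Poly_Mapping.lookup (frag_cmul (Poly_Mapping.lookup c (x, Bar [])) (frag_of (x, Bar []))) k"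
  proof (cases "k = (x, Bar [])")
    case True then show ?thesis by (simp add: lookup_single)
  next
    case False
    then have "k \<notin> Poly_Mapping.keys c" using ks by auto
    then show ?thesis using False by (simp add: lookup_single in_keys_iff)
  qed
qed

lemma cmul_Bmod0:
  assumes "r \<ge> 1"
  shows "frag_cmul n (frag_of (x, Bar [])) \<in> Bmod r 0 x"
proof -
  have "Poly_Mapping.keys (frag_cmul n (frag_of (x, Bar []))) \<subseteq> {(x, Bar [])}"
    by (auto simp: in_keys_iff lookup_single split: if_splits)
  then show ?thesis using Bmod0_iff[OF assms] by blast
qed

lemma push_cmul_single:
  "push y (frag_cmul n (frag_of (x, g))) = frag_cmul n (frag_of (y * x, g))"
  by (simp add: push_def frag_extend_cmul)

lemma Bmod_add: "c \<in> Bmod r n x \<Longrightarrow> d \<in> Bmod r n x \<Longrightarrow> c + d \<in> Bmod r n x"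
  unfolding Bmod_def using keys_add by fastforce

lemma Bmod_zero: "0 \<in> Bmod r n x"
  unfolding Bmod_def by simp

lemma bdiff1:
  assumes "r \<ge> 1" "c \<in> Bmod r (Suc 0) x"
  shows "bdiff r c = 0"
  unfolding bdiff_def
proof (rule frag_extend_eq_0)
  fix k assume k: "k \<in> Poly_Mapping.keys c"
  obtain w g where kk: "k = (w, g)" by (cases k)
  have g: "g \<in> gens r" "gdeg g = 1" using assms(2) k kk unfolding Bmod_def by auto
  obtain r' where r: "r = Suc r'" using assms(1) by (cases r) auto
  obtain gs where gs: "g = Bar gs" "set gs \<subseteq> gens r' - {bunit (iter_bar r' :: 'a bdga)}"
    using g(1) r by auto
  from g(2) gs(1) obtain h where h: "gs = [h]" "gdeg h = 0"
    by (cases gs) auto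
  have bd: "bd (iter_bar r) g = bar_diff (iter_bar r') [h]"
    using r gs h by (simp add: iter_bar_def barstep_def)
  have "bar_diff (iter_bar r') [h] = 0"
  proof (cases r')
    case 0
    then obtain v where v: "h = Gz v" using gs h by auto
    have "bar_diff (iter_bar r') [h] = frag_of (v, Bar []) + frag_cmul (-1) (frag_of (v, Bar []))"
      using 0 v by (simp add: iter_bar_def zm_def bar_diff_def bar_repl_def esgn_def)
    then show ?thesis by simp
  next
    case (Suc r'')
    have "h \<in> gens r'" "h \<noteq> bunit (iter_bar r' :: 'a bdga)" using gs h by auto
    moreover have "h = Bar []" using gens_deg0[of r' h] Suc calculation h by auto
    moreover have "bunit (iter_bar r' :: 'a bdga) = Bar []" using Suc by (simp add: iter_bar_def barstep_def)
    ultimately show ?thesis by simp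
  qed
  then show "(case k of (w, g) \<Rightarrow> push w (bd (iter_bar r) g)) = 0"
    using kk bd by (simp add: push_def)
qed


definition Fa :: "nat \<Rightarrow> ('m::comm_monoid_mult \<Rightarrow> 'a monoid) \<Rightarrow> ('m \<Rightarrow> 'm \<Rightarrow> 'a \<Rightarrow> 'a) \<Rightarrow> 'a
    \<Rightarrow> ('m \<Rightarrow> 'm chain \<Rightarrow> 'a)" where
  "Fa r A act a = (\<lambda>x c. if c \<in> Bmod r 0 x
      then act 1 x (a [^]\<^bsub>A 1\<^esub> (Poly_Mapping.lookup c (x, Bar []) :: int)) else undefined)"

lemma hom_zero:
  fixes h :: "'m::comm_monoid_mult chain \<Rightarrow> 'b"
  assumes "group G" "h \<in> hom (Bgrp r n x) G"
  shows "h 0 = \<one>\<^bsub>G\<^esub>"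
proof -
  have z: "(0::'m chain) \<in> carrier (Bgrp r n x)" by (simp add: Bgrp_def Bmod_zero)
  have c: "h 0 \<in> carrier G" using assms(2) z by (auto simp: hom_def)
  have "h (0 + 0) = h 0 \<otimes>\<^bsub>G\<^esub> h 0"
    using assms(2) z by (auto simp: hom_def Bgrp_def)
  then show ?thesis using group.l_cancel_one[OF assms(1) c c] by simp
qed

lemma hom_add:
  fixes h :: "'m::comm_monoid_mult chain \<Rightarrow> 'b"
  assumes "h \<in> hom (Bgrp r n x) G" "c \<in> Bmod r n x" "d \<in> Bmod r n x"
  shows "h (c + d) = h c \<otimes>\<^bsub>G\<^esub> h d"
  using assms by (auto simp: hom_def Bgrp_def)

lemma hom_carr:
  fixes h :: "'m::comm_monoid_mult chain \<Rightarrow> 'b"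
  assumes "h \<in> hom (Bgrp r n x) G" "c \<in> Bmod r n x"
  shows "h c \<in> carrier G"
  using assms by (auto simp: hom_def Bgrp_def)

lemma determ:
  assumes mod: "hm_module A act" and r: "r \<ge> 1"
    and f: "f \<in> HomB r 0 A act" and g: "g \<in> HomB r 0 A act"
    and eq: "f 1 (frag_of (1, Bar [])) = g 1 (frag_of (1, Bar []))"
  shows "f = g"
proof -
  let ?g0 = "frag_of (1::'a, Bar []) :: 'a chain"
  have grp: "group (A 1)" using mod unfolding hm_module_def comm_group_def by blast
  have fh: "f 1 \<in> hom (Bgrp r 0 1) (A 1)" and gh: "g 1 \<in> hom (Bgrp r 0 1) (A 1)"
    using f g unfolding HomB_def by auto
  have g0: "?g0 \<in> Bmod r 0 1" using cmul_Bmod0[OF r, of 1 1] by simp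
  have P: "f 1 (frag_cmul k ?g0) = g 1 (frag_cmul k ?g0)" for k
  proof (induction k rule: int_induct[where k=0])
    case base
    then show ?case using hom_zero[OF grp fh] hom_zero[OF grp gh] by simp
  next
    case (step1 i)
    have "frag_cmul (i + 1) ?g0 = frag_cmul i ?g0 + ?g0" by (simp add: frag_cmul_distrib)
    moreover have m: "frag_cmul i ?g0 \<in> Bmod r 0 1" using cmul_Bmod0[OF r, of i 1] by simp
    ultimately show ?case using step1 hom_add[OF fh m g0] hom_add[OF gh m g0] eq
      by simp
  next
    case (step2 i)
    have e: "frag_cmul i ?g0 = frag_cmul (i - 1) ?g0 + ?g0" using frag_cmul_distrib[of "i - 1" 1 ?g0] by simp
    have m: "frag_cmul (i - 1) ?g0 \<in> Bmod r 0 1" using cmul_Bmod0[OF r, of "i - 1" 1] by simp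
    have "f 1 (frag_cmul (i - 1) ?g0) \<otimes>\<^bsub>A 1\<^esub> f 1 ?g0 = g 1 (frag_cmul (i - 1) ?g0) \<otimes>\<^bsub>A 1\<^esub> g 1 ?g0"
      using step2 hom_add[OF fh m g0] hom_add[OF gh m g0] e by simp
    then show ?case
      using group.right_cancel[OF grp, of "f 1 ?g0"] eq hom_carr[OF fh] hom_carr[OF gh] m g0 by metis
  qed
  show ?thesis
  proof (intro ext)
    fix x c
    show "f x c = g x c"
    proof (cases "c \<in> Bmod r 0 x")
      case False then show ?thesis using f g unfolding HomB_def by auto
    next
      case True
      define k where "k = Poly_Mapping.lookup c (x, Bar [])"
      have c: "c = push x (frag_cmul k ?g0)"
        using Bmod0_form[OF r True] by (simp add: push_cmul_single k_def)
      have m: "frag_cmul k ?g0 \<in> Bmod r 0 1" using cmul_Bmod0[OF r, of k 1] by simp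
      have "f (1 * x) (push x (frag_cmul k ?g0)) = act 1 x (f 1 (frag_cmul k ?g0))"
        using f m unfolding HomB_def by blast
      moreover have "g (1 * x) (push x (frag_cmul k ?g0)) = act 1 x (g 1 (frag_cmul k ?g0))"
        using g m unfolding HomB_def by blast
      ultimately show ?thesis using c P by simp
    qed
  qed
qed


lemma Fa_HomB:
  assumes mod: "hm_module A act" and r: "r \<ge> 1" and a: "a \<in> carrier (A 1)"
  shows "Fa r A act a \<in> HomB r 0 A act"
proof -
  have grp: "group (A 1)" using mod unfolding hm_module_def comm_group_def by blast
  have acth: "act x y \<in> hom (A x) (A (x * y))" for x y using mod unfolding hm_module_def by blast
  have assoc: "b \<in> carrier (A x) \<Longrightarrow> act (x * y) z (act x y b) = act x (y * z) b" for x y z b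
    using mod unfolding hm_module_def by blast
  have pc: "a [^]\<^bsub>A 1\<^esub> (k::int) \<in> carrier (A 1)" for k using group.int_pow_closed[OF grp a] by blast
  have actc: "act 1 x (a [^]\<^bsub>A 1\<^esub> (k::int)) \<in> carrier (A x)" for x k
    using acth[of 1 x] pc[of k] by (auto simp: hom_def)
  have homx: "Fa r A act a x \<in> hom (Bgrp r 0 x) (A x)" for x
  proof (rule homI)
    fix c assume "c \<in> carrier (Bgrp r 0 x)"
    then show "Fa r A act a x c \<in> carrier (A x)" using actc by (simp add: Fa_def Bgrp_def)
  next
    fix c d assume cd: "c \<in> carrier (Bgrp r 0 x)" "d \<in> carrier (Bgrp r 0 x)"
    then have c: "c \<in> Bmod r 0 x" and d: "d \<in> Bmod r 0 x" by (auto simp: Bgrp_def)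
    have cd': "c + d \<in> Bmod r 0 x" using Bmod_add[OF c d] .
    let ?n = "Poly_Mapping.lookup c (x, Bar [])" and ?m = "Poly_Mapping.lookup d (x, Bar [])"
    have "a [^]\<^bsub>A 1\<^esub> (?n + ?m) = a [^]\<^bsub>A 1\<^esub> ?n \<otimes>\<^bsub>A 1\<^esub> a [^]\<^bsub>A 1\<^esub> ?m"
      using group.int_pow_mult[OF grp a] by blast
    moreover have "act 1 x (a [^]\<^bsub>A 1\<^esub> ?n \<otimes>\<^bsub>A 1\<^esub> a [^]\<^bsub>A 1\<^esub> ?m)
       = act 1 x (a [^]\<^bsub>A 1\<^esub> ?n) \<otimes>\<^bsub>A (1 * x)\<^esub> act 1 x (a [^]\<^bsub>A 1\<^esub> ?m)"
      using acth[of 1 x] pc by (simp add: hom_def)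
    ultimately show "Fa r A act a x (c \<otimes>\<^bsub>Bgrp r 0 x\<^esub> d) = Fa r A act a x c \<otimes>\<^bsub>A x\<^esub> Fa r A act a x d"
      using c d cd' by (simp add: Fa_def Bgrp_def lookup_add)
  qed
  have nat: "Fa r A act a (x * y) (push y c) = act x y (Fa r A act a x c)" if c: "c \<in> Bmod r 0 x" for x y c
  proof -
    define k where "k = Poly_Mapping.lookup c (x, Bar [])"
    have ce: "c = frag_cmul k (frag_of (x, Bar []))" using Bmod0_form[OF r c] k_def by simp
    have pe: "push y c = frag_cmul k (frag_of (x * y, Bar []))"
      using ce push_cmul_single[of y k x "Bar []"] by (simp add: mult.commute)
    have pm: "push y c \<in> Bmod r 0 (x * y)" using pe cmul_Bmod0[OF r] by simp
    have lk: "Poly_Mapping.lookup (push y c) (x * y, Bar []) = k" using pe by (simp add: lookup_single)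
    have "act (1 * x) y (act 1 x (a [^]\<^bsub>A 1\<^esub> k)) = act 1 (x * y) (a [^]\<^bsub>A 1\<^esub> k)"
      using assoc[OF pc[of k], of x y] by simp
    then show ?thesis using c pm lk k_def by (simp add: Fa_def)
  qed
  show ?thesis unfolding HomB_def using homx nat by (auto simp: Fa_def)
qed

theorem corollary5p5:
  fixes A :: "'m::comm_monoid_mult \<Rightarrow> 'a monoid"
    and act :: "'m \<Rightarrow> 'm \<Rightarrow> 'a \<Rightarrow> 'a"
    and r :: nat
  assumes "hm_module A act"
    and "r \<ge> 1"
  shows "cohom 0 r A act \<cong> A 1"
proof -
  note mod = assms(1) and r = assms(2)
  let ?g0 = "frag_of (1::'m, Bar []) :: 'm chain"
  let ?HB = "HomB r 0 A act"
  let ?G0 = "HomG r 0 A act"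
  let ?H = "?G0\<lparr>carrier := cocycles r 0 A act\<rparr>"
  have grpx: "group (A x)" for x using mod unfolding hm_module_def comm_group_def by blast
  have grp: "group (A 1)" using grpx .
  have act11: "b \<in> carrier (A 1) \<Longrightarrow> act 1 1 b = b" for b using mod unfolding hm_module_def by simp
  have g0: "?g0 \<in> Bmod r 0 1" using cmul_Bmod0[OF r, of 1 1] by simp
  have cyc: "cocycles r 0 A act = ?HB"
  proof -
    have "cobdry r 0 f = \<one>\<^bsub>HomG r (Suc 0) A act\<^esub>" if f: "f \<in> ?HB" for f
    proof (intro ext)
      fix x c
      have fh: "f x \<in> hom (Bgrp r 0 x) (A x)" using f unfolding HomB_def by blast
      show "cobdry r 0 f x c = \<one>\<^bsub>HomG r (Suc 0) A act\<^esub> x c"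
        using bdiff1[OF r, of c x] hom_zero[OF grpx fh] by (simp add: cobdry_def HomG_def)
    qed
    then show ?thesis unfolding cocycles_def by auto
  qed
  have one_l: "\<one>\<^bsub>?G0\<^esub> \<otimes>\<^bsub>?G0\<^esub> f = f" if f: "f \<in> ?HB" for f
  proof (intro ext)
    fix x c
    show "(\<one>\<^bsub>?G0\<^esub> \<otimes>\<^bsub>?G0\<^esub> f) x c = f x c"
    proof (cases "c \<in> Bmod r 0 x")
      case True
      have fh: "f x \<in> hom (Bgrp r 0 x) (A x)" using f unfolding HomB_def by blast
      show ?thesis using True hom_carr[OF fh True] monoid.l_one[OF group.is_monoid[OF grpx]] by (simp add: HomG_def)
    next
      case False then show ?thesis using f unfolding HomB_def HomG_def by auto
    qed
  qed
  have carr: "carrier (cohom 0 r A act) = (\<lambda>f. {f}) ` ?HB"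
  proof -
    have "carrier (cohom 0 r A act) = (\<Union>f\<in>?HB. {{\<one>\<^bsub>?G0\<^esub> \<otimes>\<^bsub>?G0\<^esub> f}})"
      unfolding cohom_def FactGroup_def RCOSETS_def r_coset_def coboundaries_def using cyc by simp
    also have "\<dots> = (\<lambda>f. {f}) ` ?HB" using one_l by auto
    finally show ?thesis .
  qed
  have mult: "{f} \<otimes>\<^bsub>cohom 0 r A act\<^esub> {g} = {f \<otimes>\<^bsub>?G0\<^esub> g}" for f g
    unfolding cohom_def FactGroup_def set_mult_def by simp
  define psi :: "('m \<Rightarrow> 'm chain \<Rightarrow> 'a) set \<Rightarrow> 'a" where "psi = (\<lambda>S. the_elem S 1 ?g0)"
  have fc: "f 1 ?g0 \<in> carrier (A 1)" if "f \<in> ?HB" for f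
    using that g0 hom_carr[of "f 1"] unfolding HomB_def by blast
  have "psi \<in> hom (cohom 0 r A act) (A 1)"
  proof (rule homI)
    fix S assume "S \<in> carrier (cohom 0 r A act)"
    then show "psi S \<in> carrier (A 1)" using carr fc by (auto simp: psi_def)
  next
    fix S T assume "S \<in> carrier (cohom 0 r A act)" "T \<in> carrier (cohom 0 r A act)"
    then obtain f g where "f \<in> ?HB" "g \<in> ?HB" "S = {f}" "T = {g}" using carr by auto
    then show "psi (S \<otimes>\<^bsub>cohom 0 r A act\<^esub> T) = psi S \<otimes>\<^bsub>A 1\<^esub> psi T"
      using mult g0 by (simp add: psi_def HomG_def)
  qed
  moreover have "bij_betw psi (carrier (cohom 0 r A act)) (carrier (A 1))"
  proof (rule bij_betw_imageI)
    show "inj_on psi (carrier (cohom 0 r A act))"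
      unfolding carr inj_on_def psi_def using determ[OF mod r] by auto
  next
    show "psi ` carrier (cohom 0 r A act) = carrier (A 1)"
    proof
      show "psi ` carrier (cohom 0 r A act) \<subseteq> carrier (A 1)" using carr fc by (auto simp: psi_def)
    next
      show "carrier (A 1) \<subseteq> psi ` carrier (cohom 0 r A act)"
      proof
        fix a assume a: "a \<in> carrier (A 1)"
        have F: "Fa r A act a \<in> ?HB" using Fa_HomB[OF mod r a] .
        have "psi {Fa r A act a} = a"
          using g0 a act11 group.int_pow_1[OF grp a] by (simp add: psi_def Fa_def lookup_single)
        then show "a \<in> psi ` carrier (cohom 0 r A act)" using F carr by (metis image_eqI imageI)
      qed
    qed
  qed
  ultimately show ?thesis unfolding is_iso_def iso_def by blast
qed

end
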